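(* Let $\mathbb{R}^n$ and $\mathbb{R}^m$ be endowed with arbitrary norms (both denoted $\|\cdot\|$). Suppose $A\in\mathbb{R}^{m\times n}$ has at least two different columns and $f:\mathbb{R}^m\to\mathbb{R}\cup\{\infty\}$ is a differentiable convex function that is $L_f$-smooth and $\mu_f$-strongly convex on $\mathrm{conv}(A)$. Then \[ L_{f,A}\le L_f\cdot\max_{w\in\mathbb{R}^n\setminus\{0\},\ \langle\mathbf{1},w\rangle=0}\frac{\|Aw\|^2}{\|w\|^2},\qquad \mu_{f,A}\ge\frac{\mu_f\cdot\Phi(A)^2}{4\max_{i=1,\dots,n}\|e_i\|^2}, \] and in particular \[ \frac{L_{f,A}}{\mu_{f,A}}\le\frac{L_f}{\mu_f}\cdot\frac{4\max_{i}\|e_i\|^2}{\Phi(A)^2}\cdot\max_{w\in\mathbb{R}^n\setminus\{0\},\ \langle\mathbf{1},w\rangle=0}\frac{\|Aw\|^2}{\|w\|^2}. \]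
   Context: $\mathbf{1}$ is the all-ones vector and $e_i$ the standard basis vectors of $\mathbb{R}^n$. A differentiable convex $f$ is $L_f$-smooth ($L_f>0$) on $S\subseteq\mathrm{dom}(f)$ if $f(v)\le f(u)+\langle\nabla f(u),v-u\rangle+\frac{L_f}{2}\|v-u\|^2$ for all $u,v\in S$, and $\mu_f$-strongly convex ($\mu_f\ge0$) on $S$ if $f(v)\ge f(u)+\langle\nabla f(u),v-u\rangle+\frac{\mu_f}{2}\|v-u\|^2$ for all $u,v\in S$ (norm of $\mathbb{R}^m$). $\Delta_{n-1}=\{x\in\mathbb{R}^n_+:\sum_ix_i=1\}$; $A$ is identified with the set of its columns; $\mathrm{conv}(A)=\{Ax:x\in\Delta_{n-1}\}$; for $u\in\mathrm{conv}(A)$, $Z(u)=\{z\in\Delta_{n-1}:Az=u\}$ and $\mathrm{dist}(x,Z(u))=\min_{z\in Z(u)}\|x-z\|$ (norm of $\mathbb{R}^n$). The relative constants are \[ L_{f,A}=\sup_{u\in\mathrm{conv}(A),\,x\in\Delta_{n-1}\setminus Z(u)}\frac{2(f(Ax)-f(u)-\langle\nabla f(u),Ax-u\rangle)}{\mathrm{dist}(x,Z(u))^2}, \] and $\mu_{f,A}$ the same with $\inf$ instead of $\sup$. The facial distance is $\Phi(A)=\min\{\mathrm{dist}(F,\mathrm{conv}(A\setminus F)):F\text{ a face of }\mathrm{conv}(A),\ \emptyset\ne F\ne\mathrm{conv}(A)\}$, with $A\setminus F$ the columns of $A$ not in $F$ and $\mathrm{dist}(F,G)=\inf_{u\in F,w\in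 G}\|u-w\|$ (norm of $\mathbb{R}^m$). *)

theory Defs
  imports "HOL-Analysis.Analysis"
begin

definition is_norm :: "('a::real_vector \<Rightarrow> real) \<Rightarrow> bool" where
  "is_norm N \<longleftrightarrow> (\<forall>x. N x = 0 \<longleftrightarrow> x = 0) \<and> (\<forall>x y. N (x + y) \<le> N x + N y)
     \<and> (\<forall>c x. N (c *\<^sub>R x) = \<bar>c\<bar> * N x)"

definition unit_simplex :: "(real^'n) set" where
  "unit_simplex = {x. (\<forall>i. 0 \<le> x $ i) \<and> (\<Sum>i\<in>UNIV. x $ i) = 1}"

definition convA :: "real^'n^'m \<Rightarrow> (real^'m) set" where
  "convA A = {A *v x | x. x \<in> unit_simplex}"

definition Zset :: "real^'n^'m \<Rightarrow> real^'m \<Rightarrow> (real^'n) set" where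
  "Zset A u = {z \<in> unit_simplex. A *v z = u}"

definition distZ :: "(real^'n \<Rightarrow> real) \<Rightarrow> real^'n^'m \<Rightarrow> real^'n \<Rightarrow> real^'m \<Rightarrow> real" where
  "distZ Nn A x u = Inf {Nn (x - z) | z. z \<in> Zset A u}"

text \<open>L-smoothness and mu-strong convexity on S w.r.t. the norm Nm; f' u is the
  derivative of f at u, so f' u h = <grad f(u), h>.\<close>
definition Lsmooth_on :: "(real^'m \<Rightarrow> real) \<Rightarrow> real \<Rightarrow> (real^'m \<Rightarrow> real) \<Rightarrow> (real^'m \<Rightarrow> real^'m \<Rightarrow> real) \<Rightarrow> (real^'m) set \<Rightarrow> bool" where
  "Lsmooth_on Nm L f f' S \<longleftrightarrow>
     (\<forall>u\<in>S. \<forall>v\<in>S. f v \<le> f u + f' u (v - u) + L / 2 * (Nm (v - u))\<^sup>2)"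

definition strongly_convex_wrt :: "(real^'m \<Rightarrow> real) \<Rightarrow> real \<Rightarrow> (real^'m \<Rightarrow> real) \<Rightarrow> (real^'m \<Rightarrow> real^'m \<Rightarrow> real) \<Rightarrow> (real^'m) set \<Rightarrow> bool" where
  "strongly_convex_wrt Nm \<mu> f f' S \<longleftrightarrow>
     (\<forall>u\<in>S. \<forall>v\<in>S. f v \<ge> f u + f' u (v - u) + \<mu> / 2 * (Nm (v - u))\<^sup>2)"

definition rel_quot_set :: "(real^'n \<Rightarrow> real) \<Rightarrow> (real^'m \<Rightarrow> real) \<Rightarrow> (real^'m \<Rightarrow> real^'m \<Rightarrow> real) \<Rightarrow> real^'n^'m \<Rightarrow> real set" where
  "rel_quot_set Nn f f' A =
     {2 * (f (A *v x) - f u - f' u (A *v x - u)) / (distZ Nn A x u)\<^sup>2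
       | u x. u \<in> convA A \<and> x \<in> unit_simplex - Zset A u}"

definition L_rel :: "(real^'n \<Rightarrow> real) \<Rightarrow> (real^'m \<Rightarrow> real) \<Rightarrow> (real^'m \<Rightarrow> real^'m \<Rightarrow> real) \<Rightarrow> real^'n^'m \<Rightarrow> ereal" where
  "L_rel Nn f f' A = (SUP q\<in>rel_quot_set Nn f f' A. ereal q)"

definition mu_rel :: "(real^'n \<Rightarrow> real) \<Rightarrow> (real^'m \<Rightarrow> real) \<Rightarrow> (real^'m \<Rightarrow> real^'m \<Rightarrow> real) \<Rightarrow> real^'n^'m \<Rightarrow> ereal" where
  "mu_rel Nn f f' A = (INF q\<in>rel_quot_set Nn f f' A. ereal q)"

definition cols :: "real^'n^'m \<Rightarrow> (real^'m) set" where
  "cols A = {column j A | j. True}"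

definition norm_set_dist :: "(real^'m \<Rightarrow> real) \<Rightarrow> (real^'m) set \<Rightarrow> (real^'m) set \<Rightarrow> real" where
  "norm_set_dist Nm F G = Inf {Nm (u - w) | u w. u \<in> F \<and> w \<in> G}"

definition facial_distance :: "(real^'m \<Rightarrow> real) \<Rightarrow> real^'n^'m \<Rightarrow> real" where
  "facial_distance Nm A = Inf {norm_set_dist Nm F (convex hull {a \<in> cols A. a \<notin> F}) | F.
      F face_of convA A \<and> F \<noteq> {} \<and> F \<noteq> convA A}"

definition restricted_gain :: "(real^'n \<Rightarrow> real) \<Rightarrow> (real^'m \<Rightarrow> real) \<Rightarrow> real^'n^'m \<Rightarrow> real" where
  "restricted_gain Nn Nm A = Sup {(Nm (A *v w))\<^sup>2 / (Nn w)\<^sup>2 | w. w \<noteq> 0 \<and> (\<Sum>i\<in>UNIV. w $ i) = 0}"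

definition max_basis_norm_sq :: "(real^'n \<Rightarrow> real) \<Rightarrow> real" where
  "max_basis_norm_sq Nn = Max (range (\<lambda>i. (Nn (axis i 1))\<^sup>2))"

end

theory Submission
  imports Defs
begin


lemma isn_0: "is_norm N \<Longrightarrow> N 0 = 0" by (simp add: is_norm_def)
lemma isn_minus: "is_norm N \<Longrightarrow> N (- x) = N x"
  unfolding is_norm_def by (metis abs_minus_cancel abs_one mult_1 scaleR_minus1_left)
lemma isn_nonneg: "is_norm N \<Longrightarrow> N x \<ge> 0"
proof -
  assume n: "is_norm N"
  have "N (x + - x) \<le> N x + N (-x)" using n unfolding is_norm_def by blast
  then show ?thesis using isn_0[OF n] isn_minus[OF n, of x] by simp
qed
lemma isn_commute: "is_norm N \<Longrightarrow> N (x - y) = N (y - x)"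
  by (metis isn_minus minus_diff_eq)
lemma isn_pos: "is_norm N \<Longrightarrow> x \<noteq> 0 \<Longrightarrow> N x > 0"
  by (metis is_norm_def isn_nonneg order_le_less)
lemma isn_scale: "is_norm N \<Longrightarrow> N (c *\<^sub>R x) = \<bar>c\<bar> * N x" by (simp add: is_norm_def)
lemma isn_add: "is_norm N \<Longrightarrow> N (x + y) \<le> N x + N y" by (simp add: is_norm_def)
lemma isn_sum: "is_norm N \<Longrightarrow> N (sum f S) \<le> (\<Sum>i\<in>S. N (f i))"
proof (induction S rule: infinite_finite_induct)
  case (infinite A) then show ?case by (simp add: isn_0)
next
  case empty then show ?case by (simp add: isn_0)
next
  case (insert x F) then show ?case using isn_add[OF insert(4), of "f x" "sum f F"] by simp
qed
lemma isn_diff: "is_norm N \<Longrightarrow> N x - N y \<le> N (x - y)"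
  using isn_add[of N "x - y" y] by simp

lemma isn_upper:
  fixes N :: "'a::euclidean_space \<Rightarrow> real"
  assumes n: "is_norm N" shows "\<exists>C\<ge>0. \<forall>x. N x \<le> C * norm x"
proof (intro exI[of _ "\<Sum>b\<in>Basis. N b"] conjI allI)
  show "0 \<le> (\<Sum>b\<in>Basis. N b)" by (simp add: isn_nonneg[OF n] sum_nonneg)
  fix x :: 'a
  have "N x = N (\<Sum>b\<in>Basis. (x \<bullet> b) *\<^sub>R b)" by (simp add: euclidean_representation)
  also have "\<dots> \<le> (\<Sum>b\<in>Basis. N ((x \<bullet> b) *\<^sub>R b))" by (rule isn_sum[OF n])
  also have "\<dots> = (\<Sum>b\<in>Basis. \<bar>x \<bullet> b\<bar> * N b)" by (simp add: isn_scale[OF n])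
  also have "\<dots> \<le> (\<Sum>b\<in>Basis. norm x * N b)"
    by (intro sum_mono mult_right_mono Basis_le_norm isn_nonneg[OF n]) auto
  finally show "N x \<le> (\<Sum>b\<in>Basis. N b) * norm x" by (simp add: sum_distrib_left mult.commute)
qed

lemma isn_cont:
  fixes N :: "'a::euclidean_space \<Rightarrow> real"
  assumes n: "is_norm N" shows "continuous_on S N"
proof -
  obtain C where C: "C \<ge> 0" "\<And>x. N x \<le> C * norm x" using isn_upper[OF n] by blast
  have "\<bar>N x - N y\<bar> \<le> C * norm (x - y)" for x y
    using isn_diff[OF n, of x y] isn_diff[OF n, of y x] C(2)[of "x - y"] C(2)[of "y - x"]
    by (simp add: abs_le_iff norm_minus_commute)
  then have "C-lipschitz_on S N" by (intro lipschitz_onI) (auto simp: dist_norm C)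
  then show ?thesis by (rule lipschitz_on_continuous_on)
qed

lemma isn_lower:
  fixes N :: "'a::euclidean_space \<Rightarrow> real"
  assumes n: "is_norm N" shows "\<exists>c>0. \<forall>x. c * norm x \<le> N x"
proof -
  have ne: "sphere (0::'a) 1 \<noteq> {}" by (simp add: sphere_eq_empty)
  obtain y where y: "y \<in> sphere 0 1" "\<And>z. z \<in> sphere 0 1 \<Longrightarrow> N y \<le> N z"
    using continuous_attains_inf[OF compact_sphere ne isn_cont[OF n]] by blast
  have "y \<noteq> 0" using y(1) by auto
  then have pos: "N y > 0" by (rule isn_pos[OF n])
  show ?thesis
  proof (intro exI[of _ "N y"] conjI allI pos)
    fix x :: 'a
    show "N y * norm x \<le> N x"
    proof (cases "x = 0")
      case True then show ?thesis by (simp add: isn_0[OF n])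
    next
      case False
      have "N y \<le> N ((1 / norm x) *\<^sub>R x)" using False by (intro y(2)) auto
      also have "\<dots> = N x / norm x" by (simp add: isn_scale[OF n])
      finally show ?thesis using False by (simp add: field_simps)
    qed
  qed
qed


lemma simplex_iff: "x \<in> unit_simplex \<longleftrightarrow> (\<forall>i. 0 \<le> x $ i) \<and> (\<Sum>i\<in>UNIV. x $ i) = 1"
  by (simp add: unit_simplex_def)

lemma simplex_le1: "x \<in> unit_simplex \<Longrightarrow> x $ i \<le> 1"
proof -
  assume "x \<in> unit_simplex"
  then have "\<forall>i. 0 \<le> x $ i" "(\<Sum>i\<in>UNIV. x $ i) = 1" by (auto simp: simplex_iff)
  then show ?thesis using member_le_sum[of i UNIV "\<lambda>i. x $ i"] by auto
qed

lemma axis_simplex: "axis j (1::real) \<in> unit_simplex"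
  by (simp add: simplex_iff axis_def)

lemma closed_simplex: "closed (unit_simplex :: (real^'n) set)"
proof -
  have "unit_simplex = {x::real^'n. (\<forall>i. 0 \<le> x $ i) \<and> (\<Sum>i\<in>UNIV. x $ i) = 1}"
    by (simp add: unit_simplex_def)
  also have "closed \<dots>"
    by (intro closed_Collect_conj closed_Collect_all closed_Collect_le closed_Collect_eq continuous_intros)
  finally show ?thesis .
qed

lemma bounded_simplex: "bounded (unit_simplex :: (real^'n) set)"
proof -
  have "unit_simplex \<subseteq> cbox (0::real^'n) 1"
    using simplex_le1 by (auto simp: mem_box_cart) (auto simp: simplex_iff)
  then show ?thesis using bounded_cbox bounded_subset by blast
qed

lemma compact_simplex: "compact (unit_simplex :: (real^'n) set)"
  by (simp add: bounded_simplex closed_simplex compact_eq_bounded_closed)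

lemma convex_simplex: "convex (unit_simplex :: (real^'n) set)"
  unfolding convex_def
  by (auto simp: simplex_iff sum.distrib sum_distrib_left[symmetric])

lemma compact_Zset: "compact (Zset A u)"
proof -
  have "Zset A u = unit_simplex \<inter> {z. A *v z = u}" by (auto simp: Zset_def)
  moreover have "closed {z. A *v z = u}"
    by (intro closed_Collect_eq continuous_intros linear_continuous_on) auto
  ultimately show ?thesis
    by (metis closed_Int_compact compact_simplex Int_commute)
qed

lemma convA_image: "convA A = (\<lambda>x. A *v x) ` unit_simplex"
  by (auto simp: convA_def)

lemma Zset_ne: "u \<in> convA A \<Longrightarrow> Zset A u \<noteq> {}"
  by (auto simp: convA_def Zset_def)

lemma finite_cols: "finite (cols A)"
proof -
  have "cols A = (\<lambda>j. column j A) ` UNIV" by (auto simp: cols_def)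
  then show ?thesis by simp
qed

lemma column_convA0: "column j A \<in> convA A"
  using axis_simplex by (auto simp: convA_def matrix_vector_mult_basis intro!: exI[of _ "axis j 1"])

lemma convA_hull: "convA A = convex hull (cols A)"
proof
  show "convA A \<subseteq> convex hull (cols A)"
  proof
    fix v assume "v \<in> convA A"
    then obtain x where x: "x \<in> unit_simplex" "v = A *v x" by (auto simp: convA_def)
    have "v = (\<Sum>i\<in>UNIV. (x$i) *\<^sub>R column i A)"
      using x by (simp add: matrix_mult_sum scalar_mult_eq_scaleR)
    also have "\<dots> \<in> convex hull (cols A)"
      using x(1) by (intro convex_sum) (auto simp: simplex_iff cols_def intro!: hull_inc)
    finally show "v \<in> convex hull (cols A)" .
  qed
next
  have "convex (convA A)"
    unfolding convA_image by (intro convex_linear_image convex_simplex matrix_vector_mul_linear)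
  moreover have "cols A \<subseteq> convA A"
    using column_convA0 by (auto simp: cols_def)
  ultimately show "convex hull (cols A) \<subseteq> convA A" by (rule hull_minimal[rotated])
qed

lemma column_convA: "column j A \<in> convA A"
  using axis_simplex by (auto simp: convA_def matrix_vector_mult_basis intro!: exI[of _ "axis j 1"])

lemma polytope_convA: "polytope (convA A)"
  by (simp add: convA_hull finite_cols polytope_convex_hull)

lemma compact_convA: "compact (convA A)"
  by (simp add: convA_hull finite_cols compact_convex_hull finite_imp_compact)

lemma convex_convA: "convex (convA A)"
  by (simp add: convA_hull)



lemma face_relint:
  fixes P :: "'a::euclidean_space set"
  assumes P: "polytope P" and b: "b \<in> P"
  shows "\<exists>G. G face_of P \<and> b \<in> rel_interior G"
proof -
  define \<F> where "\<F> = {F. F face_of P \<and> b \<in> F}"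
  define G where "G = \<Inter>\<F>"
  have "P \<in> \<F>" using b face_of_refl[OF polytope_imp_convex[OF P]] by (auto simp: \<F>_def)
  then have ne: "\<F> \<noteq> {}" by blast
  have G: "G face_of P" unfolding G_def by (rule face_of_Inter[OF ne]) (auto simp: \<F>_def)
  have bG: "b \<in> G" by (auto simp: G_def \<F>_def)
  have min: "G \<subseteq> F" if "F face_of P" "b \<in> F" for F
    using that by (auto simp: G_def \<F>_def)
  have "b \<in> rel_interior G"
  proof (rule ccontr)
    assume nb: "b \<notin> rel_interior G"
    have pG: "polytope G" using face_of_polytope_polytope[OF P G] .
    then have "closed G" by (rule polytope_imp_closed)
    then have "b \<in> rel_frontier G" using nb bG by (simp add: rel_frontier_def)
    then obtain F' where F': "F' facet_of G" "b \<in> F'"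
      using rel_frontier_of_polyhedron[OF polytope_imp_polyhedron[OF pG]] by blast
    have "F' face_of P" using face_of_trans[OF facet_of_imp_face_of[OF F'(1)] G] .
    then have "G \<subseteq> F'" using min F'(2) by blast
    moreover have "F' \<subseteq> G" using facet_of_imp_subset[OF F'(1)] .
    ultimately have "F' = G" by blast
    then show False using F'(1) by simp
  qed
  then show ?thesis using G by blast
qed

lemma face_hull_disjoint:
  fixes S :: "'a::real_vector set"
  assumes F: "F face_of S" and S: "convex S" and K: "finite K" "K \<subseteq> S" "K \<inter> F = {}"
  shows "convex hull K \<inter> F = {}"
  using K
proof (induction K rule: finite_induct)
  case empty then show ?case by simp
next
  case (insert a K0)
  show ?case
  proof (cases "K0 = {}")
    case True then show ?thesis using insert.prems by simp
  next
    case False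
    show ?thesis
    proof (rule ccontr)
      assume "convex hull insert a K0 \<inter> F \<noteq> {}"
      then obtain x where xF: "x \<in> F" and xh: "x \<in> convex hull insert a K0" by blast
      have "x \<in> {x. \<exists>u\<ge>0. \<exists>v\<ge>0. \<exists>b. (u + v = 1) \<and> b \<in> (convex hull K0) \<and> (x = u *\<^sub>R a + v *\<^sub>R b)}"
        using xh unfolding convex_hull_insert[OF False] .
      then obtain u v c where uv: "u \<ge> 0" "v \<ge> 0" "u + v = 1" "c \<in> convex hull K0"
          "x = u *\<^sub>R a + v *\<^sub>R c"
        by blast
      have aS: "a \<in> S" and aF: "a \<notin> F" using insert.prems by auto
      have cS: "c \<in> S" proof -
        have "K0 \<subseteq> S" using insert.prems(1) by simp
        then have "convex hull K0 \<subseteq> S" using S by (rule hull_minimal)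
        then show ?thesis using uv(4) by blast
      qed
      have "K0 \<subseteq> S" "K0 \<inter> F = {}" using insert.prems by auto
      then have "convex hull K0 \<inter> F = {}" by (rule insert.IH)
      then have cF: "c \<notin> F" using uv(4) by blast
      show False
      proof (cases "v = 0")
        case True then show False using uv xF aF by simp
      next
        case v: False
        show False
        proof (cases "u = 0")
          case True then show False using uv xF cF by simp
        next
          case u: False
          show False
          proof (cases "a = c")
            case True
            then have "x = (u + v) *\<^sub>R a" using uv(5) by (simp add: scaleR_left_distrib)
            then show False using uv(3) xF aF by simp
          next
            case False
            have ueq: "u = 1 - v" using uv by simp
            have xeq: "x = (1 - v) *\<^sub>R a + v *\<^sub>R c" using uv(5) ueq by simp
            have "0 < v" "v < 1" using uv u v by auto
            then have "x \<in> open_segment a c"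
              unfolding in_segment(2) using False xeq by blast
            then have "a \<in> F" using face_ofD[OF F _ aS cS xF] by blast
            then show False using aF by simp
          qed
        qed
      qed
    qed
  qed
qed



lemma nsd_set_eq: "{Nm (u - w) | u w. u \<in> F \<and> w \<in> H} = (\<lambda>p. Nm (fst p - snd p)) ` (F \<times> H)"
  by force

lemma nsd_le:
  assumes "is_norm Nm" "u \<in> F" "w \<in> H"
  shows "norm_set_dist Nm F H \<le> Nm (u - w)"
  unfolding norm_set_dist_def
  by (rule cInf_lower) (use assms isn_nonneg in \<open>auto intro!: bdd_belowI[of _ 0]\<close>)

lemma nsd_pos:
  fixes Nm :: "real^'m \<Rightarrow> real"
  assumes n: "is_norm Nm" and F: "compact F" "F \<noteq> {}" and H: "compact H" "H \<noteq> {}"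
    and d: "F \<inter> H = {}"
  shows "norm_set_dist Nm F H > 0"
proof -
  have c: "compact (F \<times> H)" using F H by (simp add: compact_Times)
  have ne: "F \<times> H \<noteq> {}" using F H by simp
  have cont: "continuous_on (F \<times> H) (\<lambda>p. Nm (fst p - snd p))"
    by (rule continuous_on_compose2[OF isn_cont[OF n, of UNIV]]) (auto intro!: continuous_intros)
  obtain p where p: "p \<in> F \<times> H" "\<And>q. q \<in> F \<times> H \<Longrightarrow> Nm (fst p - snd p) \<le> Nm (fst q - snd q)"
    using continuous_attains_inf[OF c ne cont] by blast
  have "norm_set_dist Nm F H = Nm (fst p - snd p)"
    unfolding norm_set_dist_def nsd_set_eq
    by (rule cInf_eq_minimum) (use p in auto)
  moreover have "fst p - snd p \<noteq> 0" using p(1) d by auto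
  ultimately show ?thesis using isn_pos[OF n] by simp
qed

definition proper_faces :: "real^'n^'m \<Rightarrow> (real^'m) set set" where
  "proper_faces A = {F. F face_of convA A \<and> F \<noteq> {} \<and> F \<noteq> convA A}"

lemma fd_eq: "facial_distance Nm A =
   Inf ((\<lambda>F. norm_set_dist Nm F (convex hull {a \<in> cols A. a \<notin> F})) ` proper_faces A)"
  unfolding facial_distance_def proper_faces_def by (rule arg_cong[where f=Inf]) blast

lemma proper_face_props:
  assumes "F \<in> proper_faces A"
  shows "compact F" "compact (convex hull {a \<in> cols A. a \<notin> F})"
    "convex hull {a \<in> cols A. a \<notin> F} \<noteq> {}"
    "F \<inter> convex hull {a \<in> cols A. a \<notin> F} = {}"
proof -
  have F: "F face_of convA A" "F \<noteq> {}" "F \<noteq> convA A" using assms by (auto simp: proper_faces_def)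
  show "compact F" using face_of_imp_compact[OF convex_convA compact_convA F(1)] .
  show "compact (convex hull {a \<in> cols A. a \<notin> F})"
    by (rule compact_convex_hull, rule finite_imp_compact) (simp add: finite_cols)
  show "convex hull {a \<in> cols A. a \<notin> F} \<noteq> {}"
  proof
    assume "convex hull {a \<in> cols A. a \<notin> F} = {}"
    then have "cols A \<subseteq> F" by auto
    then have "convex hull (cols A) \<subseteq> F" using face_of_imp_convex[OF F(1)] by (rule hull_minimal)
    then show False using F face_of_imp_subset[OF F(1)] by (simp add: convA_hull)
  qed
  have "cols A \<subseteq> convA A" by (simp add: convA_hull hull_subset)
  then have "convex hull {a \<in> cols A. a \<notin> F} \<inter> F = {}"
    by (intro face_hull_disjoint[OF F(1) convex_convA]) (auto simp: finite_cols)
  then show "F \<inter> convex hull {a \<in> cols A. a \<notin> F} = {}" by blast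
qed

lemma finite_proper_faces: "finite (proper_faces A)"
  by (rule finite_subset[OF _ finite_polytope_faces[OF polytope_convA]]) (auto simp: proper_faces_def)

lemma fd_pos:
  assumes n: "is_norm Nm" and ne: "proper_faces A \<noteq> {}"
  shows "facial_distance Nm A > 0"
proof -
  let ?D = "(\<lambda>F. norm_set_dist Nm F (convex hull {a \<in> cols A. a \<notin> F})) ` proper_faces A"
  have e1: "Inf ?D = Min ?D" using finite_proper_faces ne by (intro cInf_eq_Min) auto
  have e2: "Min ?D \<in> ?D" using finite_proper_faces ne by (intro Min_in) auto
  have e3: "\<forall>d\<in>?D. d > 0"
  proof
    fix d assume "d \<in> ?D"
    then obtain F where F: "F \<in> proper_faces A" and d: "d = norm_set_dist Nm F (convex hull {a \<in> cols A. a \<notin> F})" by blast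
    have "F \<noteq> {}" using F by (simp add: proper_faces_def)
    then show "d > 0" unfolding d
      by (rule nsd_pos[OF n proper_face_props(1)[OF F] _ proper_face_props(2,3,4)[OF F]])
  qed
  have "Min ?D > 0" using e3 e2 by (rule bspec)
  then have "Inf ?D > 0" by (simp only: e1)
  then show ?thesis unfolding fd_eq .
qed

lemma fd_le:
  assumes "F \<in> proper_faces A"
  shows "facial_distance Nm A \<le> norm_set_dist Nm F (convex hull {a \<in> cols A. a \<notin> F})"
  unfolding fd_eq
  by (rule cInf_lower) (use assms finite_proper_faces[of A] in \<open>auto intro!: bdd_below_finite\<close>)



lemma cont_mv[continuous_intros]:
  fixes A :: "real^'n^'m"
  shows "continuous_on S g \<Longrightarrow> continuous_on S (\<lambda>p. A *v g p)"
  by (rule continuous_on_compose2[OF linear_continuous_on[OF matrix_vector_mul_bounded_linear]]) auto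

lemma mv_axis_add: "A *v (r + k *\<^sub>R axis i 1) = A *v r + k *\<^sub>R column i (A::real^'n^'m)"
  by (simp add: matrix_vector_right_distrib matrix_vector_mult_scaleR matrix_vector_mult_basis)

lemma sum_axis: "(\<Sum>j\<in>UNIV. (axis i (1::real)) $ j) = 1"
  by (simp add: axis_def)

lemma facial_key:
  fixes A :: "real^'n^'m"
  assumes x: "x \<in> unit_simplex" and u: "u \<in> convA A" and nz: "x \<notin> Zset A u"
  shows "\<exists>z t G a b. z \<in> Zset A u \<and> t > 0 \<and> (\<Sum>i\<in>UNIV. \<bar>x$i - z$i\<bar>) \<le> 2*t
     \<and> A *v x - u = t *\<^sub>R (a - b) \<and> G \<in> proper_faces A \<and> b \<in> G
     \<and> a \<in> convex hull {c \<in> cols A. c \<notin> G}"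
proof -
  define K where "K = {p :: (real^'n) \<times> (real^'n). (\<forall>i. 0 \<le> fst p $ i) \<and> (\<forall>i. fst p $ i \<le> x $ i)
     \<and> (\<forall>i. 0 \<le> snd p $ i) \<and> (\<Sum>i\<in>UNIV. snd p $ i) = 1
     \<and> A *v fst p + (1 - (\<Sum>i\<in>UNIV. fst p $ i)) *\<^sub>R (A *v snd p) = u}"
  have "closed K" unfolding K_def
    by (intro closed_Collect_conj closed_Collect_all closed_Collect_le closed_Collect_eq continuous_intros)
  moreover have "bounded K"
  proof -
    have "K \<subseteq> cbox 0 x \<times> unit_simplex" by (auto simp: K_def mem_box_cart simplex_iff)
    moreover have "bounded (cbox 0 x \<times> unit_simplex)"
      by (intro bounded_Times bounded_cbox bounded_simplex)
    ultimately show ?thesis using bounded_subset by blast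
  qed
  ultimately have cK: "compact K" by (simp add: compact_eq_bounded_closed)
  obtain z0 where z0: "z0 \<in> Zset A u" using Zset_ne[OF u] by blast
  have "(0, z0) \<in> K" using z0 x by (auto simp: K_def Zset_def simplex_iff)
  then have neK: "K \<noteq> {}" by blast
  have contK: "continuous_on K (\<lambda>p. \<Sum>i\<in>UNIV. fst p $ i)" by (intro continuous_intros)
  obtain p0 where p0: "p0 \<in> K" and pmax: "\<And>q. q \<in> K \<Longrightarrow> (\<Sum>i\<in>UNIV. fst q $ i) \<le> (\<Sum>i\<in>UNIV. fst p0 $ i)"
    using continuous_attains_sup[OF cK neK contK] by blast
  define r where "r = fst p0"
  define y where "y = snd p0"
  define s where "s = (\<Sum>i\<in>UNIV. r $ i)"
  define t where "t = 1 - s"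
  have r0: "\<And>i. 0 \<le> r $ i" and rx: "\<And>i. r $ i \<le> x $ i" and y: "y \<in> unit_simplex"
    and ueq: "A *v r + t *\<^sub>R (A *v y) = u"
    using p0 by (auto simp: K_def r_def y_def s_def t_def simplex_iff)
  have x0: "\<And>i. 0 \<le> x $ i" and x1: "(\<Sum>i\<in>UNIV. x $ i) = 1" using x by (auto simp: simplex_iff)
  have y0: "\<And>i. 0 \<le> y $ i" and y1: "(\<Sum>i\<in>UNIV. y $ i) = 1" using y by (auto simp: simplex_iff)
  define p where "p = x - r"
  have p0': "\<And>i. 0 \<le> p $ i" using rx by (simp add: p_def)
  have psum: "(\<Sum>i\<in>UNIV. p $ i) = t"
    by (simp add: p_def t_def s_def sum_subtractf x1)
  have tpos: "t > 0"
  proof (rule ccontr)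
    assume "\<not> t > 0"
    then have "(\<Sum>i\<in>UNIV. p $ i) \<le> 0" using psum by simp
    then have "\<forall>i. p $ i = 0"
      using p0' sum_nonneg_eq_0_iff[of UNIV "\<lambda>i. p $ i"] by (simp add: order_antisym sum_nonneg)
    then have "r = x" by (simp add: p_def vec_eq_iff)
    moreover have "t = 0" using \<open>r = x\<close> x1 by (simp add: t_def s_def)
    ultimately have "A *v x = u" using ueq by simp
    then show False using nz x by (simp add: Zset_def)
  qed
  define b where "b = A *v y"
  have bconv: "b \<in> convA A" using y by (auto simp: b_def convA_def)
  obtain G where G: "G face_of convA A" and brel: "b \<in> rel_interior G"
    using face_relint[OF polytope_convA bconv] by blast
  have bG: "b \<in> G" using brel rel_interior_subset by blast
  have cl: "column i A \<notin> G" if pi: "0 < p $ i" for i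
  proof
    define c where "c = column i A"
    assume "column i A \<in> G"
    then have cG: "c \<in> G" by (simp add: c_def)
    obtain e where e: "e > 0" "cball b e \<inter> affine hull G \<subseteq> G"
      using brel by (auto simp: mem_rel_interior_cball)
    define \<epsilon> where "\<epsilon> = min (e / (norm (b - c) + 1)) (p $ i / t)"
    have epos: "\<epsilon> > 0" using e pi tpos by (simp add: \<epsilon>_def add_nonneg_pos)
    have ep1: "\<epsilon> * t \<le> p $ i" using tpos by (simp add: \<epsilon>_def min_def field_simps split: if_splits)
    have ep2: "\<epsilon> * (norm (b - c) + 1) \<le> e"
    proof -
      have "\<epsilon> \<le> e / (norm (b - c) + 1)" by (simp add: \<epsilon>_def)
      then show ?thesis by (simp add: field_simps add_pos_nonneg)
    qed
    define b' where "b' = b + \<epsilon> *\<^sub>R (b - c)"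
    have "b' \<in> affine hull G"
      unfolding b'_def by (rule mem_affine_3_minus) (auto intro: hull_inc bG cG)
    moreover have "b' \<in> cball b e"
    proof -
      have "dist b b' = \<epsilon> * norm (b - c)" using epos by (simp add: b'_def dist_norm)
      also have "\<dots> \<le> e" using ep2 epos by (smt (verit) mult_nonneg_nonneg norm_ge_zero distrib_left)
      finally show ?thesis by simp
    qed
    ultimately have "b' \<in> G" using e(2) by blast
    then have "b' \<in> convA A" using face_of_imp_subset[OF G] by blast
    then obtain y' where y': "y' \<in> unit_simplex" "A *v y' = b'" by (auto simp: convA_def)
    define \<delta> where "\<delta> = \<epsilon> / (1 + \<epsilon>)"
    have d0: "0 < \<delta>" "\<delta> \<le> \<epsilon>" using epos by (auto simp: \<delta>_def field_simps)
    have h1: "(1 - \<delta>) * (1 + \<epsilon>) = 1" and h2: "(1 - \<delta>) * \<epsilon> = \<delta>"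
      using epos by (auto simp: \<delta>_def field_simps)
    have key: "(1 - \<delta>) *\<^sub>R b' = b - \<delta> *\<^sub>R c"
    proof -
      have "(1 - \<delta>) *\<^sub>R b' = ((1 - \<delta>) * (1 + \<epsilon>)) *\<^sub>R b - ((1 - \<delta>) * \<epsilon>) *\<^sub>R c"
        by (simp add: b'_def algebra_simps)
      then show ?thesis by (simp only: h1 h2 scaleR_one)
    qed
    define r' where "r' = r + (t * \<delta>) *\<^sub>R axis i 1"
    have sr': "(\<Sum>j\<in>UNIV. r' $ j) = s + t * \<delta>"
      by (simp add: r'_def sum.distrib s_def sum_distrib_left[symmetric] sum_axis)
    have "(r', y') \<in> K"
    proof -
      have "0 \<le> r' $ j" for j using r0[of j] tpos d0 by (simp add: r'_def axis_def)
      moreover have "r' $ j \<le> x $ j" for j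
      proof (cases "j = i")
        case True
        have "t * \<delta> \<le> t * \<epsilon>" using d0 tpos by simp
        then show ?thesis using True ep1 by (simp add: r'_def axis_def p_def algebra_simps)
      next
        case False then show ?thesis using rx[of j] by (simp add: r'_def axis_def)
      qed
      moreover have "A *v r' + (1 - (\<Sum>j\<in>UNIV. r' $ j)) *\<^sub>R (A *v y') = u"
      proof -
        have "1 - (\<Sum>j\<in>UNIV. r' $ j) = t * (1 - \<delta>)" by (simp add: sr' t_def algebra_simps)
        then have "A *v r' + (1 - (\<Sum>j\<in>UNIV. r' $ j)) *\<^sub>R (A *v y')
            = A *v r + (t * \<delta>) *\<^sub>R c + t *\<^sub>R ((1 - \<delta>) *\<^sub>R b')"
          by (simp add: r'_def mv_axis_add c_def y'(2))
        also have "\<dots> = A *v r + t *\<^sub>R b"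
        proof -
          have "t *\<^sub>R ((1 - \<delta>) *\<^sub>R b') = t *\<^sub>R b - (t * \<delta>) *\<^sub>R c"
            unfolding key by (simp add: algebra_simps)
          then show ?thesis by simp
        qed
        finally show ?thesis using ueq by (simp add: b_def)
      qed
      ultimately show ?thesis using y' by (auto simp: K_def simplex_iff)
    qed
    then have "s + t * \<delta> \<le> s" using pmax[of "(r', y')"] sr' by (simp add: s_def r_def)
    moreover have "0 < t * \<delta>" using tpos d0 by simp
    ultimately show False by simp
  qed
  define I where "I = {i. 0 < p $ i}"
  have psumI: "(\<Sum>i\<in>I. p $ i) = t"
  proof -
    have "(\<Sum>i\<in>I. p $ i) = (\<Sum>i\<in>UNIV. p $ i)"
      by (rule sum.mono_neutral_left) (use p0' in \<open>auto simp: I_def order_le_less\<close>)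
    then show ?thesis using psum by simp
  qed
  obtain i0 where "i0 \<in> I"
  proof (cases "I = {}")
    case True then show ?thesis using psumI tpos by simp
  qed blast
  have GneA: "G \<noteq> convA A" using cl[of i0] \<open>i0 \<in> I\<close> column_convA by (auto simp: I_def)
  have Gp: "G \<in> proper_faces A" using G bG GneA by (auto simp: proper_faces_def)
  define a where "a = (\<Sum>i\<in>I. (p $ i / t) *\<^sub>R column i A)"
  have aH: "a \<in> convex hull {c \<in> cols A. c \<notin> G}"
    unfolding a_def
  proof (rule convex_sum)
    show "(\<Sum>i\<in>I. p $ i / t) = 1" using psumI tpos by (simp add: sum_divide_distrib[symmetric])
    show "\<And>i. i \<in> I \<Longrightarrow> 0 \<le> p $ i / t" using p0' tpos by simp
    show "\<And>i. i \<in> I \<Longrightarrow> column i A \<in> convex hull {c \<in> cols A. c \<notin> G}"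
      using cl by (auto simp: I_def cols_def intro!: hull_inc)
  qed auto
  have Ap: "A *v p = t *\<^sub>R a"
  proof -
    have "A *v p = (\<Sum>i\<in>UNIV. p $ i *\<^sub>R column i A)" by (simp add: matrix_mult_sum scalar_mult_eq_scaleR)
    also have "\<dots> = (\<Sum>i\<in>I. p $ i *\<^sub>R column i A)"
      by (rule sum.mono_neutral_right) (use p0' in \<open>auto simp: I_def order_le_less\<close>)
    also have "\<dots> = t *\<^sub>R a" using tpos by (simp add: a_def scaleR_sum_right)
    finally show ?thesis .
  qed
  have xu: "A *v x - u = t *\<^sub>R (a - b)"
  proof -
    have "x = r + p" by (simp add: p_def)
    then have "A *v x = A *v r + A *v p" by (simp add: matrix_vector_right_distrib)
    then show ?thesis using ueq Ap by (simp add: b_def algebra_simps)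
  qed
  define z where "z = r + t *\<^sub>R y"
  have zZ: "z \<in> Zset A u"
  proof -
    have "\<forall>i. 0 \<le> z $ i" using r0 y0 tpos by (simp add: z_def)
    moreover have "(\<Sum>i\<in>UNIV. z $ i) = 1"
      by (simp add: z_def sum.distrib sum_distrib_left[symmetric] y1 s_def[symmetric] t_def)
    moreover have "A *v z = u" using ueq by (simp add: z_def matrix_vector_right_distrib matrix_vector_mult_scaleR)
    ultimately show ?thesis by (simp add: Zset_def simplex_iff)
  qed
  have "(\<Sum>i\<in>UNIV. \<bar>x$i - z$i\<bar>) \<le> (\<Sum>i\<in>UNIV. p $ i + t * y $ i)"
  proof (rule sum_mono)
    fix i
    have "x$i - z$i = p$i - t * y$i" by (simp add: z_def p_def)
    then show "\<bar>x$i - z$i\<bar> \<le> p $ i + t * y $ i" proof -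
      have "0 \<le> t * y $ i" using y0[of i] tpos by simp
      then show ?thesis using \<open>x$i - z$i = p$i - t * y$i\<close> p0'[of i] by linarith
    qed
  qed
  also have "\<dots> = 2 * t" by (simp add: sum.distrib psum sum_distrib_left[symmetric] y1)
  finally have dist: "(\<Sum>i\<in>UNIV. \<bar>x$i - z$i\<bar>) \<le> 2 * t" .
  show ?thesis using zZ tpos dist xu Gp bG aH by blast
qed



lemma Mbasis:
  fixes Nn :: "real^'n \<Rightarrow> real"
  assumes n: "is_norm Nn"
  shows "Nn (axis i 1) \<le> sqrt (max_basis_norm_sq Nn)" "max_basis_norm_sq Nn > 0"
proof -
  have le: "(Nn (axis i 1))\<^sup>2 \<le> max_basis_norm_sq Nn" for i
  proof -
    have f: "finite (range (\<lambda>i. (Nn (axis i 1))\<^sup>2))" by (rule finite_imageI) simp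
    have r: "(Nn (axis i 1))\<^sup>2 \<in> range (\<lambda>i. (Nn (axis i 1))\<^sup>2)" by (rule rangeI)
    show ?thesis unfolding max_basis_norm_sq_def using f r by (rule Max_ge)
  qed
  then show "Nn (axis i 1) \<le> sqrt (max_basis_norm_sq Nn)"
    using isn_nonneg[OF n, of "axis i 1"] real_le_rsqrt[of "Nn (axis i 1)" "max_basis_norm_sq Nn"] by simp
  have "Nn (axis i 1) > 0" using isn_pos[OF n] by (simp add: axis_eq_0_iff)
  then have "0 < (Nn (axis i 1))\<^sup>2" by simp
  then show "max_basis_norm_sq Nn > 0" using le[of i] by linarith
qed

lemma Nn_l1:
  fixes Nn :: "real^'n \<Rightarrow> real"
  assumes n: "is_norm Nn"
  shows "Nn w \<le> (\<Sum>i\<in>UNIV. \<bar>w $ i\<bar>) * sqrt (max_basis_norm_sq Nn)"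
proof -
  have "Nn w = Nn (\<Sum>i\<in>UNIV. (w $ i) *\<^sub>R axis i 1)"
    using basis_expansion[of w] by (simp add: scalar_mult_eq_scaleR)
  also have "\<dots> \<le> (\<Sum>i\<in>UNIV. Nn ((w $ i) *\<^sub>R axis i 1))" by (rule isn_sum[OF n])
  also have "\<dots> = (\<Sum>i\<in>UNIV. \<bar>w $ i\<bar> * Nn (axis i 1))" by (simp add: isn_scale[OF n])
  also have "\<dots> \<le> (\<Sum>i\<in>UNIV. \<bar>w $ i\<bar> * sqrt (max_basis_norm_sq Nn))"
    by (intro sum_mono mult_left_mono Mbasis[OF n]) auto
  finally show ?thesis by (simp add: sum_distrib_right)
qed

lemma distZ_att:
  fixes Nn :: "real^'n \<Rightarrow> real" and A :: "real^'n^'m"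
  assumes n: "is_norm Nn" and x: "x \<in> unit_simplex" and u: "u \<in> convA A" and nz: "x \<notin> Zset A u"
  shows "\<exists>z\<in>Zset A u. distZ Nn A x u = Nn (x - z) \<and> Nn (x - z) > 0
            \<and> (\<forall>z'\<in>Zset A u. Nn (x - z) \<le> Nn (x - z'))"
proof -
  have cont: "continuous_on (Zset A u) (\<lambda>z. Nn (x - z))"
    by (rule continuous_on_compose2[OF isn_cont[OF n, of UNIV]]) (auto intro!: continuous_intros)
  obtain z where z: "z \<in> Zset A u" "\<And>z'. z' \<in> Zset A u \<Longrightarrow> Nn (x - z) \<le> Nn (x - z')"
    using continuous_attains_inf[OF compact_Zset Zset_ne[OF u] cont] by blast
  have "distZ Nn A x u = Nn (x - z)"
    unfolding distZ_def by (rule cInf_eq_minimum) (use z in auto)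
  moreover have "x - z \<noteq> 0" using z(1) nz by auto
  ultimately show ?thesis using z isn_pos[OF n] by blast
qed

lemma gain_props:
  fixes Nn :: "real^'n \<Rightarrow> real" and Nm :: "real^'m \<Rightarrow> real" and A :: "real^'n^'m"
  assumes n: "is_norm Nn" and m: "is_norm Nm"
  shows "\<And>w. w \<noteq> 0 \<Longrightarrow> (\<Sum>i\<in>UNIV. w $ i) = 0 \<Longrightarrow> (Nm (A *v w))\<^sup>2 \<le> restricted_gain Nn Nm A * (Nn w)\<^sup>2"
    and "column i A \<noteq> column j A \<Longrightarrow> restricted_gain Nn Nm A > 0"
proof -
  define W where "W = {(Nm (A *v w))\<^sup>2 / (Nn w)\<^sup>2 | w. w \<noteq> 0 \<and> (\<Sum>i\<in>UNIV. w $ i) = 0}"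
  obtain C where C: "C \<ge> 0" "\<And>x. Nm x \<le> C * norm x" using isn_upper[OF m] by blast
  obtain c where c: "c > 0" "\<And>x. c * norm x \<le> Nn x" using isn_lower[OF n] by blast
  obtain K where K: "K > 0" "\<And>x. norm (A *v x) \<le> norm x * K"
    using bounded_linear.pos_bounded[OF matrix_vector_mul_bounded_linear[of A]] by blast
  have bd: "Nm (A *v w) \<le> (C * K / c) * Nn w" for w
  proof -
    have "Nm (A *v w) \<le> C * norm (A *v w)" by (rule C(2))
    also have "\<dots> \<le> C * (norm w * K)" using C(1) K(2) by (rule mult_left_mono[rotated])
    also have "\<dots> = (C * K) * norm w" by simp
    also have "\<dots> \<le> (C * K) * (Nn w / c)"
      using c C(1) K(1) by (intro mult_left_mono) (auto simp: field_simps)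
    finally show ?thesis by simp
  qed
  have bdd: "bdd_above W"
  proof (rule bdd_aboveI[of _ "(C * K / c)\<^sup>2"])
    fix q assume "q \<in> W"
    then obtain w where w: "w \<noteq> 0" "q = (Nm (A *v w))\<^sup>2 / (Nn w)\<^sup>2" by (auto simp: W_def)
    have pos: "Nn w > 0" using isn_pos[OF n w(1)] .
    have "(Nm (A *v w))\<^sup>2 \<le> ((C * K / c) * Nn w)\<^sup>2"
      using bd[of w] isn_nonneg[OF m] by (intro power_mono) auto
    also have "((C * K / c) * Nn w)\<^sup>2 = (C * K / c)\<^sup>2 * (Nn w)\<^sup>2" by (rule power_mult_distrib)
    finally show "q \<le> (C * K / c)\<^sup>2" using pos by (simp only: w(2) divide_le_eq) simp
  qed
  have upper: "q \<le> restricted_gain Nn Nm A" if "q \<in> W" for q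
    unfolding restricted_gain_def W_def[symmetric] using bdd that by (rule cSup_upper[rotated])
  show "(Nm (A *v w))\<^sup>2 \<le> restricted_gain Nn Nm A * (Nn w)\<^sup>2"
    if "w \<noteq> 0" "(\<Sum>i\<in>UNIV. w $ i) = 0" for w
  proof -
    have "(Nm (A *v w))\<^sup>2 / (Nn w)\<^sup>2 \<le> restricted_gain Nn Nm A"
      using that by (intro upper) (auto simp: W_def)
    moreover have "Nn w > 0" using isn_pos[OF n that(1)] .
    ultimately show ?thesis by (simp add: divide_le_eq)
  qed
  show "restricted_gain Nn Nm A > 0" if ij: "column i A \<noteq> column j A"
  proof -
    define w where "w = axis j (1::real) - axis i 1"
    have "i \<noteq> j" using ij by auto
    then have w0: "w \<noteq> 0" by (simp add: w_def axis_eq_axis)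
    have ws: "(\<Sum>k\<in>UNIV. w $ k) = 0" by (simp add: w_def sum_subtractf sum_axis)
    have "A *v w = column j A - column i A"
      by (simp add: w_def matrix_vector_mult_diff_distrib matrix_vector_mult_basis)
    then have "A *v w \<noteq> 0" using ij by simp
    then have "Nm (A *v w) > 0" using isn_pos[OF m] by blast
    moreover have "Nn w > 0" using isn_pos[OF n w0] .
    ultimately have "0 < (Nm (A *v w))\<^sup>2 / (Nn w)\<^sup>2" by simp
    also have "\<dots> \<le> restricted_gain Nn Nm A" using w0 ws by (intro upper) (auto simp: W_def)
    finally show ?thesis .
  qed
qed



theorem corollary3:
  fixes Nn :: "real^'n \<Rightarrow> real" and Nm :: "real^'m \<Rightarrow> real"
    and A :: "real^'n^'m" and f :: "real^'m \<Rightarrow> real"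
    and f' :: "real^'m \<Rightarrow> real^'m \<Rightarrow> real" and D :: "(real^'m) set"
    and Lf \<mu>f :: real
  assumes "is_norm Nn" and "is_norm Nm"
    and "\<exists>i j. column i A \<noteq> column j A"
    and "open D" and "convex D" and "convex_on D f"
    and "\<forall>u\<in>D. (f has_derivative f' u) (at u)"
    and "convA A \<subseteq> D"
    and "Lf > 0" and "\<mu>f \<ge> 0"
    and "Lsmooth_on Nm Lf f f' (convA A)"
    and "strongly_convex_wrt Nm \<mu>f f f' (convA A)"
  shows "L_rel Nn f f' A \<le> ereal (Lf * restricted_gain Nn Nm A)
    \<and> mu_rel Nn f f' A \<ge> ereal (\<mu>f * (facial_distance Nm A)\<^sup>2 / (4 * max_basis_norm_sq Nn))
    \<and> L_rel Nn f f' A / mu_rel Nn f f' A \<le>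
           ereal Lf / ereal \<mu>f * ereal (4 * max_basis_norm_sq Nn / (facial_distance Nm A)\<^sup>2)
             * ereal (restricted_gain Nn Nm A)"
proof -
  note n = assms(1) and m = assms(2)
  obtain i j where ij: "column i A \<noteq> column j A" using assms(3) by blast
  define M where "M = max_basis_norm_sq Nn"
  define \<Phi> where "\<Phi> = facial_distance Nm A"
  define g where "g = restricted_gain Nn Nm A"
  define Q where "Q = rel_quot_set Nn f f' A"
  have Mpos: "M > 0" using Mbasis[OF n] by (simp add: M_def)
  have gpos: "g > 0" using gain_props(2)[OF n m ij] by (simp add: g_def)
  have u0: "column i A \<in> convA A" by (rule column_convA)
  have x0: "axis j 1 \<in> unit_simplex" by (rule axis_simplex)
  have nz0: "axis j 1 \<notin> Zset A (column i A)"
    using ij by (auto simp: Zset_def matrix_vector_mult_basis)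
  have pfne: "proper_faces A \<noteq> {}" using facial_key[OF x0 u0 nz0] by blast
  have \<Phi>pos: "\<Phi> > 0" unfolding \<Phi>_def by (rule fd_pos[OF m pfne])
  have Qne: "Q \<noteq> {}" using x0 u0 nz0 by (auto simp: Q_def rel_quot_set_def)
  have bounds: "\<mu>f * \<Phi>\<^sup>2 / (4 * M) \<le> q \<and> q \<le> Lf * g" if qQ: "q \<in> Q" for q
  proof -
    obtain u x where u: "u \<in> convA A" and x: "x \<in> unit_simplex" and nz: "x \<notin> Zset A u"
      and q: "q = 2 * (f (A *v x) - f u - f' u (A *v x - u)) / (distZ Nn A x u)\<^sup>2"
      using qQ by (auto simp: Q_def rel_quot_set_def)
    define N where "N = f (A *v x) - f u - f' u (A *v x - u)"
    obtain z0 where z0: "z0 \<in> Zset A u" "distZ Nn A x u = Nn (x - z0)" "Nn (x - z0) > 0"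
      "\<And>z'. z' \<in> Zset A u \<Longrightarrow> Nn (x - z0) \<le> Nn (x - z')"
      using distZ_att[OF n x u nz] by blast
    define d where "d = Nn (x - z0)"
    have dpos: "d > 0" using z0 by (simp add: d_def)
    have qd: "q = 2 * N / d\<^sup>2" using q z0(2) by (simp add: N_def d_def)
    have Ax: "A *v x \<in> convA A" using x by (auto simp: convA_def)
    have sm: "2 * N \<le> Lf * (Nm (A *v x - u))\<^sup>2"
    proof -
      have "f (A *v x) \<le> f u + f' u (A *v x - u) + Lf / 2 * (Nm (A *v x - u))\<^sup>2"
        using assms(11) u Ax unfolding Lsmooth_on_def by blast
      then show ?thesis unfolding N_def by (simp add: field_simps)
    qed
    have sc: "\<mu>f * (Nm (A *v x - u))\<^sup>2 \<le> 2 * N"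
    proof -
      have "f (A *v x) \<ge> f u + f' u (A *v x - u) + \<mu>f / 2 * (Nm (A *v x - u))\<^sup>2"
        using assms(12) u Ax unfolding strongly_convex_wrt_def by blast
      then show ?thesis unfolding N_def by (simp add: field_simps)
    qed
    have up: "q \<le> Lf * g"
    proof -
      have Az0: "A *v z0 = u" using z0(1) by (simp add: Zset_def)
      have w0: "x - z0 \<noteq> 0" using z0(3) isn_0[OF n] by auto
      have ws: "(\<Sum>k\<in>UNIV. (x - z0) $ k) = 0"
        using x z0(1) by (simp add: sum_subtractf Zset_def simplex_iff)
      have "A *v x - u = A *v (x - z0)" using Az0 by (simp add: matrix_vector_mult_diff_distrib)
      then have "(Nm (A *v x - u))\<^sup>2 \<le> g * d\<^sup>2"
        using gain_props(1)[OF n m w0 ws] by (simp add: g_def d_def)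
      then have "2 * N \<le> Lf * g * d\<^sup>2"
        using sm assms(9) by (smt (verit) mult.assoc mult_left_mono)
      then show ?thesis using dpos by (simp add: qd divide_le_eq)
    qed
    obtain z t G a b where z: "z \<in> Zset A u" and tpos: "t > 0"
      and l1: "(\<Sum>i\<in>UNIV. \<bar>x$i - z$i\<bar>) \<le> 2*t" and xu: "A *v x - u = t *\<^sub>R (a - b)"
      and G: "G \<in> proper_faces A" and bG: "b \<in> G" and aH: "a \<in> convex hull {c \<in> cols A. c \<notin> G}"
      using facial_key[OF x u nz] by blast
    have "d \<le> Nn (x - z)" using z0(4)[OF z] by (simp add: d_def)
    also have "\<dots> \<le> (\<Sum>i\<in>UNIV. \<bar>(x - z)$i\<bar>) * sqrt M" using Nn_l1[OF n, of "x - z"] by (simp add: M_def)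
    also have "\<dots> \<le> (2 * t) * sqrt M" using l1 Mpos by (intro mult_right_mono) auto
    finally have dle: "d \<le> 2 * t * sqrt M" .
    have d2: "d\<^sup>2 \<le> 4 * t\<^sup>2 * M"
    proof -
      have "d\<^sup>2 \<le> (2 * t * sqrt M)\<^sup>2" using dle dpos by (intro power_mono) auto
      also have "\<dots> = 4 * t\<^sup>2 * M" using Mpos by (simp add: power_mult_distrib)
      finally show ?thesis .
    qed
    have "\<Phi> \<le> norm_set_dist Nm G (convex hull {c \<in> cols A. c \<notin> G})"
      unfolding \<Phi>_def by (rule fd_le[OF G])
    also have "\<dots> \<le> Nm (b - a)" by (rule nsd_le[OF m bG aH])
    also have "\<dots> = Nm (a - b)" by (rule isn_commute[OF m])
    finally have \<Phi>le: "\<Phi> \<le> Nm (a - b)" .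
    have "Nm (A *v x - u) = t * Nm (a - b)" using xu tpos by (simp add: isn_scale[OF m])
    then have "t * \<Phi> \<le> Nm (A *v x - u)" using \<Phi>le tpos by simp
    then have tp2: "(t * \<Phi>)\<^sup>2 \<le> (Nm (A *v x - u))\<^sup>2" using tpos \<Phi>pos by (intro power_mono) auto
    have "\<mu>f * \<Phi>\<^sup>2 / (4 * M) * d\<^sup>2 \<le> \<mu>f * \<Phi>\<^sup>2 / (4 * M) * (4 * t\<^sup>2 * M)"
      using d2 assms(10) Mpos by (intro mult_left_mono) auto
    also have "\<dots> = \<mu>f * (t * \<Phi>)\<^sup>2" using Mpos by (simp add: field_simps power_mult_distrib)
    also have "\<dots> \<le> \<mu>f * (Nm (A *v x - u))\<^sup>2" using tp2 assms(10) by (rule mult_left_mono)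
    also have "\<dots> \<le> 2 * N" by (rule sc)
    finally have "\<mu>f * \<Phi>\<^sup>2 / (4 * M) * d\<^sup>2 \<le> 2 * N" .
    then have low: "\<mu>f * \<Phi>\<^sup>2 / (4 * M) \<le> q" using dpos by (simp add: qd le_divide_eq)
    show ?thesis using low up by simp
  qed
  have Lb: "L_rel Nn f f' A \<le> ereal (Lf * g)"
    unfolding L_rel_def Q_def[symmetric] by (rule SUP_least) (use bounds in auto)
  have mb: "ereal (\<mu>f * \<Phi>\<^sup>2 / (4 * M)) \<le> mu_rel Nn f f' A"
    unfolding mu_rel_def Q_def[symmetric] by (rule INF_greatest) (use bounds in auto)
  obtain q0 where q0: "q0 \<in> Q" using Qne by blast
  have mq: "mu_rel Nn f f' A \<le> ereal q0"
    unfolding mu_rel_def Q_def[symmetric] using q0 by (rule INF_lower)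
  have Lq: "ereal q0 \<le> L_rel Nn f f' A"
    unfolding L_rel_def Q_def[symmetric] using q0 by (rule SUP_upper)
  have cpos: "4 * M / \<Phi>\<^sup>2 > 0" using Mpos \<Phi>pos by simp
  have third: "L_rel Nn f f' A / mu_rel Nn f f' A \<le>
           ereal Lf / ereal \<mu>f * ereal (4 * M / \<Phi>\<^sup>2) * ereal g"
  proof (cases "\<mu>f = 0")
    case True
    have "ereal Lf / ereal \<mu>f = \<infinity>" using True assms(9) by (simp add: divide_ereal_def)
    then have "ereal Lf / ereal \<mu>f * ereal (4 * M / \<Phi>\<^sup>2) * ereal g = \<infinity>"
      using cpos gpos Mpos \<Phi>pos by simp
    then show ?thesis by (simp only: ereal_less_eq(1))
  next
    case False
    then have mupos: "\<mu>f > 0" using assms(10) by simp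
    define lo where "lo = \<mu>f * \<Phi>\<^sup>2 / (4 * M)"
    have lopos: "lo > 0" using mupos \<Phi>pos Mpos by (simp add: lo_def)
    obtain mm where mm: "mu_rel Nn f f' A = ereal mm"
      using mb mq by (cases "mu_rel Nn f f' A") (auto simp: lo_def)
    obtain l where l: "L_rel Nn f f' A = ereal l"
      using Lb Lq mq by (cases "L_rel Nn f f' A") auto
    have mml: "lo \<le> mm" using mb mm by (simp add: lo_def)
    have lup: "l \<le> Lf * g" using Lb l by simp
    have mmq: "mm \<le> q0" and lq: "q0 \<le> l" using mq mm Lq l by auto
    have mmpos: "mm > 0" using lopos mml by simp
    have "l / mm \<le> (Lf * g) / lo"
      using lup mml lopos mmq lq mmpos by (intro frac_le) auto
    also have "\<dots> = Lf / \<mu>f * (4 * M / \<Phi>\<^sup>2) * g"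
      using mupos \<Phi>pos Mpos by (simp add: lo_def field_simps)
    finally have "l / mm \<le> Lf / \<mu>f * (4 * M / \<Phi>\<^sup>2) * g" .
    then show ?thesis using mmpos mupos by (simp add: mm l)
  qed
  show ?thesis
    unfolding g_def[symmetric] M_def[symmetric] \<Phi>_def[symmetric] using Lb mb third by blast
qed

end
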